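(* Let $r\in(0,1)$, let $\vec x=(x_n)_{n\in\mathbb{N}}$ be a complex sequence, and let $L\in\mathbb{C}$. If $\lim_{N\to\infty}\mathbb{E}^{\mathrm{Bin}(r)}_{n\le N}(\vec x)=L$, then $\lim_{N\to\infty}\mathbb{E}^{\mathrm{Bin}(r)}_{n\le N}(T\vec x)=L$. Consequently, for every $k\in\mathbb{N}$, $\lim_{N\to\infty}\mathbb{E}^{\mathrm{Bin}(r)}_{n\le N}(T^k\vec x)=L$.
   Context: $\mathbb{N}=\{0,1,2,\dots\}$. For $r\in(0,1)$, a complex sequence $\vec y=(y_n)_{n\in\mathbb{N}}$ and $N\in\mathbb{N}$, $\mathbb{E}^{\mathrm{Bin}(r)}_{n\le N}(\vec y)=\sum_{n=0}^{N}\binom{N}{n}r^n(1-r)^{N-n}y_n$. $T$ is the right-shift operator: $T(y_0,y_1,y_2,\dots)=(0,y_0,y_1,\dots)$, so $(T^k\vec y)_n=y_{n-k}$ for $n\ge k$ and $0$ for $n<k$. *)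

theory Defs
  imports Complex_Main
begin

definition binE :: "real \<Rightarrow> (nat \<Rightarrow> complex) \<Rightarrow> nat \<Rightarrow> complex" where
  "binE r y N = (\<Sum>n=0..N. of_real (real (N choose n) * r ^ n * (1 - r) ^ (N - n)) * y n)"

definition shiftR :: "(nat \<Rightarrow> complex) \<Rightarrow> nat \<Rightarrow> complex" where
  "shiftR y n = (if n = 0 then 0 else y (n - 1))"

end

theory Submission
  imports Defs
begin

definition wB :: "real \<Rightarrow> nat \<Rightarrow> nat \<Rightarrow> real" where
  "wB r N n = real (N choose n) * r ^ n * (1 - r) ^ (N - n)"

lemma binE_alt: "binE r y N = (\<Sum>n\<le>N. of_real (wB r N n) * y n)"
  unfolding binE_def wB_def by (simp add: atLeast0AtMost)

lemma wB_Suc: "wB r (Suc N) (Suc m) = r * wB r N m + (1 - r) * wB r N (Suc m)"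
proof (cases "m < N")
  case True
  then have e: "N - m = Suc (N - Suc m)" by simp
  show ?thesis unfolding wB_def binomial_Suc_Suc diff_Suc_Suc e power_Suc
    by (simp add: algebra_simps)
next
  case False
  then have z: "N choose Suc m = 0" by simp
  have z2: "N - m = 0" using False by simp
  show ?thesis unfolding wB_def binomial_Suc_Suc diff_Suc_Suc z z2 by simp
qed

lemma wB_big: "N < n \<Longrightarrow> wB r N n = 0"
  unfolding wB_def by simp

lemma rec_shift:
  "binE r (shiftR x) (Suc N) = of_real (1 - r) * binE r (shiftR x) N + of_real r * binE r x N"
proof -
  have A: "binE r (shiftR x) (Suc N) = (\<Sum>m\<le>N. of_real (wB r (Suc N) (Suc m)) * x m)"
    unfolding binE_alt by (subst sum.atMost_Suc_shift) (simp add: shiftR_def)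
  have B: "binE r (shiftR x) N = (\<Sum>m\<le>N. of_real (wB r N (Suc m)) * x m)"
  proof (cases N)
    case 0 then show ?thesis by (simp add: binE_alt shiftR_def wB_big)
  next
    case (Suc K)
    have "binE r (shiftR x) N = (\<Sum>m\<le>K. of_real (wB r N (Suc m)) * x m)"
      unfolding binE_alt Suc by (subst sum.atMost_Suc_shift) (simp add: shiftR_def)
    also have "\<dots> = (\<Sum>m\<le>N. of_real (wB r N (Suc m)) * x m)"
      using Suc by (simp add: wB_big)
    finally show ?thesis .
  qed
  have C: "binE r x N = (\<Sum>m\<le>N. of_real (wB r N m) * x m)" by (rule binE_alt)
  show ?thesis unfolding A B C wB_Suc sum_distrib_left sum.distrib[symmetric]
    by (intro sum.cong refl) (simp add: algebra_simps)
qed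

lemma conv_lemma:
  fixes a b :: "nat \<Rightarrow> complex" and q :: real
  assumes q0: "0 < q" and q1: "q < 1"
    and rec: "\<And>N. a (Suc N) = of_real q * a N + of_real (1 - q) * b N"
    and lim: "b \<longlonglongrightarrow> L"
  shows "a \<longlonglongrightarrow> L"
proof -
  define c where "c N = a N - L" for N
  define d where "d N = b N - L" for N
  have crec: "c (Suc N) = of_real q * c N + of_real (1 - q) * d N" for N
    unfolding c_def d_def rec by (simp add: algebra_simps)
  have nq: "cmod (1 - complex_of_real q) = 1 - q"
    using q1 by (metis of_real_1 of_real_diff norm_of_real abs_of_nonneg diff_ge_0_iff_ge less_imp_le)
  have d0: "d \<longlonglongrightarrow> 0" unfolding d_def using lim by (simp add: LIM_zero)
  have "c \<longlonglongrightarrow> 0"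
  proof (rule LIMSEQ_I)
    fix e :: real assume e: "0 < e"
    obtain M where M: "\<And>n. n \<ge> M \<Longrightarrow> norm (d n) < e / 2"
      using LIMSEQ_D[OF d0, of "e/2"] e by auto
    have ind: "norm (c (M + k)) \<le> e / 2 + q ^ k * norm (c M)" for k
    proof (induction k)
      case 0 then show ?case using e by simp
    next
      case (Suc k)
      have "norm (c (M + Suc k)) \<le> q * norm (c (M + k)) + (1 - q) * norm (d (M + k))"
        unfolding add_Suc_right crec
        using norm_triangle_ineq[of "of_real q * c (M + k)" "of_real (1 - q) * d (M + k)"]
          q0 q1 nq by (simp add: norm_mult)
      also have "\<dots> \<le> q * (e / 2 + q ^ k * norm (c M)) + (1 - q) * (e / 2)"
        using Suc.IH M[of "M+k"] q0 q1
        by (intro add_mono mult_left_mono) auto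
      also have "\<dots> = e / 2 + q ^ Suc k * norm (c M)" by (simp add: algebra_simps diff_divide_distrib)
      finally show ?case .
    qed
    have "(\<lambda>k. q ^ k * norm (c M)) \<longlonglongrightarrow> 0 * norm (c M)"
      by (intro tendsto_mult tendsto_const LIMSEQ_power_zero) (use q0 q1 in auto)
    then have "(\<lambda>k. q ^ k * norm (c M)) \<longlonglongrightarrow> 0" by simp
    from LIMSEQ_D[OF this, of "e/2"] e obtain K where
      K: "\<And>k. k \<ge> K \<Longrightarrow> norm (q ^ k * norm (c M) - 0) < e / 2" by auto
    show "\<exists>no. \<forall>n\<ge>no. norm (c n - 0) < e"
    proof (intro exI allI impI)
      fix n assume n: "n \<ge> M + K"
      define k where "k = n - M"
      have k: "n = M + k" "k \<ge> K" using n unfolding k_def by auto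
      have "q ^ k * norm (c M) < e / 2" using K[OF k(2)] q0 by simp
      moreover have "norm (c n) \<le> e / 2 + q ^ k * norm (c M)" using ind[of k] k(1) by simp
      ultimately show "norm (c n - 0) < e" by simp
    qed
  qed
  then show ?thesis unfolding c_def using LIM_zero_cancel[of a L] by simp
qed

lemma shift_one:
  assumes "0 < r" "r < 1" "(\<lambda>N. binE r x N) \<longlonglongrightarrow> L"
  shows "(\<lambda>N. binE r (shiftR x) N) \<longlonglongrightarrow> L"
  by (rule conv_lemma[where q = "1 - r" and b = "\<lambda>N. binE r x N"])
     (use assms rec_shift in auto)

theorem mainTheorem6:
  fixes r :: real and x :: "nat \<Rightarrow> complex" and L :: complex
  assumes "0 < r" and "r < 1"
    and "(\<lambda>N. binE r x N) \<longlonglongrightarrow> L"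
  shows "((\<lambda>N. binE r (shiftR x) N) \<longlonglongrightarrow> L) \<and>
         (\<forall>k::nat. (\<lambda>N. binE r ((shiftR ^^ k) x) N) \<longlonglongrightarrow> L)"
proof
  show "(\<lambda>N. binE r (shiftR x) N) \<longlonglongrightarrow> L" using shift_one assms by blast
  show "\<forall>k::nat. (\<lambda>N. binE r ((shiftR ^^ k) x) N) \<longlonglongrightarrow> L"
  proof
    fix k show "(\<lambda>N. binE r ((shiftR ^^ k) x) N) \<longlonglongrightarrow> L"
      by (induction k) (use assms shift_one in auto)
  qed
qed

end
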